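(* Let $(p,q)$ be a coprime pair of positive integers with $1\le q<p$, let $(a,b)=(p-q,q)$, and let $n_L,n_R$, the integers $a_j$ ($-n_R\le j\le n_L$, $j\ne0$) and $c$ be constructed from $(a,b)$ as in the context. Then \[[\,|a_1|,\dots,|a_{n_L}|,|c|,|a_{-n_R}|,\dots,|a_{-1}|\,]=\frac{p^2}{pq-1}\quad\text{or}\quad[\,|a_{-1}|,\dots,|a_{-n_R}|,|c|,|a_{n_L}|,\dots,|a_1|\,]=\frac{p^2}{pq-1}.\] Equivalently, the linear plumbing of disk bundles over $S^2$ with Euler numbers $a_1,\dots,a_{n_L},c,a_{-n_R},\dots,a_{-1}$ (in this order along a chain) is diffeomorphic to $C_{p,q}$.
   Context: Continued fractions: $[x_1,\dots,x_n]=x_1-\cfrac{1}{x_2-\cfrac{1}{\ddots-\cfrac{1}{x_n}}}$. $C_{p,q}$ is the linear plumbing with weights $-c_0,\dots,-c_N$ where $p^2/(pq-1)=[c_0,\dots,c_N]$ with all $c_i\ge2$. Word: set $(a_0,b_0)=(a,b)$; if $a_i>b_i$ let $w_{i+1}=L$, $(a_{i+1},b_{i+1})=(a_i-b_i,b_i)$; if $a_i<b_i$ let $w_{i+1}=R$, $(a_{i+1},b_{i+1})=(a_i,b_i-a_i)$; stop at the first $N$ with $(a_N,b_N)=(1,1)$. Let $W_i=w_{N+1-i}$, and $n_L$, $n_R$ the numbers of $L$'s and $R$'s. Sequence: each $\{a^{(i)}_j\}$ is indexed by consecutive integers $m(i)\le j\le M(i)$. Start with $(a^{(0)}_{-1},a^{(0)}_0,a^{(0)}_1)=(-1,-1,-1)$.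 For $i=1,\dots,N$, always $a^{(i)}_0=-1$, and: if $W_i=R$, set $a^{(i)}_j=a^{(i-1)}_j$ for $1<j\le M(i-1)$, $a^{(i)}_1=a^{(i-1)}_1-1$, $a^{(i)}_{-1}=-2$, $a^{(i)}_j=a^{(i-1)}_{j+1}$ for $m(i-1)-1\le j<-1$; if $W_i=L$, set $a^{(i)}_j=a^{(i-1)}_j$ for $m(i-1)\le j<-1$, $a^{(i)}_{-1}=a^{(i-1)}_{-1}-1$, $a^{(i)}_1=-2$, $a^{(i)}_j=a^{(i-1)}_{j-1}$ for $1<j\le M(i-1)+1$. After $N$ steps the index range is $-(n_R+1)\le j\le n_L+1$; put $a_j=a^{(N)}_j$ for $-n_R\le j\le n_L$, $j\neq0$, and $c=a^{(N)}_{n_L+1}+a^{(N)}_{-(n_R+1)}-2$. *)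

theory Defs
  imports Complex_Main
begin

datatype letter = L | R

text \<open>Continued fraction [x1,...,xn] = x1 - 1/(x2 - 1/(... - 1/xn)).
  The empty list is never used (junk value 0).\<close>
fun hjcf :: "real list \<Rightarrow> real" where
  "hjcf [] = 0"
| "hjcf [x] = x"
| "hjcf (x # y # ys) = x - 1 / hjcf (y # ys)"

text \<open>The word w_1 ... w_N produced from (a,b) by subtractive Euclid, stopping at (a,b) = (1,1)
  (for coprime positive a, b the first pair with equal entries is (1,1)).\<close>
function word :: "nat \<Rightarrow> nat \<Rightarrow> letter list" where
  "word a b = (if a = 0 \<or> b = 0 \<or> a = b then []
               else if a > b then L # word (a - b) b
               else R # word a (b - a))"
  by auto
termination by (relation "measure (\<lambda>(a,b). a + b)") auto

text \<open>One step of the sequence construction; the sequence a^(i) is stored as a function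
  on int (only its values on the index range m(i)..M(i) are meaningful).\<close>
definition seq_step :: "(int \<Rightarrow> int) \<Rightarrow> letter \<Rightarrow> (int \<Rightarrow> int)" where
  "seq_step f w = (case w of
      R \<Rightarrow> (\<lambda>j. if j > 1 then f j else if j = 1 then f 1 - 1 else if j = 0 then -1
                 else if j = -1 then -2 else f (j + 1))
    | L \<Rightarrow> (\<lambda>j. if j < -1 then f j else if j = -1 then f (-1) - 1 else if j = 0 then -1
                 else if j = 1 then -2 else f (j - 1)))"

definition seq0 :: "int \<Rightarrow> int" where "seq0 = (\<lambda>j. -1)"

text \<open>W_i = w_{N+1-i}, i.e. W = rev word; final sequence a^(N).\<close>
definition final_seq :: "nat \<Rightarrow> nat \<Rightarrow> (int \<Rightarrow> int)" where
  "final_seq a b = foldl seq_step seq0 (rev (word a b))"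

definition nL :: "nat \<Rightarrow> nat \<Rightarrow> nat" where
  "nL a b = length (filter (\<lambda>x. x = L) (word a b))"

definition nR :: "nat \<Rightarrow> nat \<Rightarrow> nat" where
  "nR a b = length (filter (\<lambda>x. x = R) (word a b))"

definition cval :: "nat \<Rightarrow> nat \<Rightarrow> int" where
  "cval a b = final_seq a b (int (nL a b) + 1) + final_seq a b (- (int (nR a b) + 1)) - 2"

definition chain :: "nat \<Rightarrow> nat \<Rightarrow> real list" where
  "chain a b =
     map (\<lambda>j. real_of_int \<bar>final_seq a b j\<bar>) [1 .. int (nL a b)]
     @ [real_of_int \<bar>cval a b\<bar>]
     @ map (\<lambda>j. real_of_int \<bar>final_seq a b j\<bar>) [- int (nR a b) .. -1]"

end

theory Submission
  imports Defs
begin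

declare word.simps[simp del]

lemma word_base: "a = 0 \<or> b = 0 \<or> a = b \<Longrightarrow> word a b = []"
  by (subst word.simps) simp
lemma word_L: "b < a \<Longrightarrow> 0 < b \<Longrightarrow> word a b = L # word (a - b) b"
  by (subst word.simps) simp
lemma word_R: "a < b \<Longrightarrow> 0 < a \<Longrightarrow> word a b = R # word a (b - a)"
  by (subst word.simps) simp

definition incr_hd :: "int list \<Rightarrow> int list" where
  "incr_hd xs = (case xs of [] \<Rightarrow> [] | x # ys \<Rightarrow> (x + 1) # ys)"

definition lstep :: "letter \<Rightarrow> int list \<Rightarrow> int list" where
  "lstep w l = (case w of L \<Rightarrow> incr_hd l | R \<Rightarrow> 2 # l)"
definition rstep :: "letter \<Rightarrow> int list \<Rightarrow> int list" where
  "rstep w l = (case w of R \<Rightarrow> incr_hd l | L \<Rightarrow> 2 # l)"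

definition lft where "lft a b = foldr lstep (word a b) [1]"
definition rgt where "rgt a b = foldr rstep (word a b) [1]"

lemma final_seq_foldr: "final_seq a b = foldr (\<lambda>w f. seq_step f w) (word a b) seq0"
  unfolding final_seq_def by (simp add: foldr_conv_foldl)

lemma main_idx:
  "length (lft a b) = nR a b + 1 \<and> length (rgt a b) = nL a b + 1 \<and>
   (\<forall>x\<in>set (lft a b). x \<ge> 1) \<and> (\<forall>x\<in>set (rgt a b). x \<ge> 1) \<and>
   (\<forall>i < nL a b + 1. final_seq a b (int i + 1) = - (rgt a b ! i)) \<and>
   (\<forall>i < nR a b + 1. final_seq a b (- int i - 1) = - (lft a b ! i))"
proof (induction a b rule: word.induct)
  case (1 a b)
  show ?case
  proof (cases "a = 0 \<or> b = 0 \<or> a = b")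
    case True
    then show ?thesis
      by (simp add: word_base lft_def rgt_def nL_def nR_def final_seq_def seq0_def)
  next
    case False
    show ?thesis
    proof (cases "b < a")
      case True
      with False have w: "word a b = L # word (a - b) b" by (simp add: word_L)
      note IH = "1.IH"(1)[OF False True]
      have lf: "lft a b = incr_hd (lft (a-b) b)" by (simp add: lft_def w lstep_def)
      have rg: "rgt a b = 2 # (rgt (a-b) b)" by (simp add: rgt_def w rstep_def)
      have fs: "final_seq a b = seq_step (final_seq (a-b) b) L" by (simp add: final_seq_foldr w)
      have nl: "nL a b = nL (a-b) b + 1" "nR a b = nR (a-b) b" by (simp_all add: nL_def nR_def w)
      obtain l0 ls where l0: "lft (a-b) b = l0 # ls" using IH by (cases "lft (a-b) b") auto
      have lf2: "lft a b = (l0+1) # ls" using lf l0 by (simp add: incr_hd_def)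
      show ?thesis
      proof (intro conjI allI impI)
        fix i assume i: "i < nL a b + 1"
        show "final_seq a b (int i + 1) = - (rgt a b ! i)"
        proof (cases i)
          case 0 then show ?thesis by (simp add: fs seq_step_def rg)
        next
          case (Suc k)
          have "final_seq (a-b) b (int k + 1) = - rgt (a-b) b ! k" using IH i nl Suc by auto
          then show ?thesis using Suc by (simp add: fs seq_step_def rg add.commute)
        qed
      next
        fix i assume i: "i < nR a b + 1"
        show "final_seq a b (- int i - 1) = - (lft a b ! i)"
        proof (cases i)
          case 0
          have "final_seq (a-b) b (- int 0 - 1) = - lft (a-b) b ! 0" using IH by auto
          then show ?thesis using 0 l0 by (simp add: fs seq_step_def lf2)
        next
          case (Suc k)
          have "final_seq (a-b) b (- int (Suc k) - 1) = - lft (a-b) b ! Suc k" using IH i nl Suc by auto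
          then show ?thesis using Suc l0 by (simp add: fs seq_step_def lf2 algebra_simps)
        qed
      qed (use IH nl lf2 rg l0 in auto)
    next
      case nt: False
      with False have ab: "a < b" "0 < a" by auto
      then have w: "word a b = R # word a (b - a)" by (simp add: word_R)
      note IH = "1.IH"(2)[OF False nt]
      have rg: "rgt a b = incr_hd (rgt a (b-a))" by (simp add: rgt_def w rstep_def)
      have lf: "lft a b = 2 # (lft a (b-a))" by (simp add: lft_def w lstep_def)
      have fs: "final_seq a b = seq_step (final_seq a (b-a)) R" by (simp add: final_seq_foldr w)
      have nl: "nR a b = nR a (b-a) + 1" "nL a b = nL a (b-a)" by (simp_all add: nL_def nR_def w)
      obtain l0 ls where l0: "rgt a (b-a) = l0 # ls" using IH by (cases "rgt a (b-a)") auto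
      have rg2: "rgt a b = (l0+1) # ls" using rg l0 by (simp add: incr_hd_def)
      show ?thesis
      proof (intro conjI allI impI)
        fix i assume i: "i < nR a b + 1"
        show "final_seq a b (- int i - 1) = - (lft a b ! i)"
        proof (cases i)
          case 0 then show ?thesis by (simp add: fs seq_step_def lf)
        next
          case (Suc k)
          have h: "final_seq a (b-a) (- int k - 1) = - lft a (b-a) ! k" using IH i nl Suc by auto
          have e: "- 1 - int k = - int k - 1" by simp
          have st: "seq_step (final_seq a (b-a)) R (- int i - 1) = final_seq a (b-a) ((- int i - 1) + 1)"
            using Suc by (simp add: seq_step_def)
          have e2: "(- int i - 1) + 1 = - int k - 1" using Suc by simp
          show ?thesis using st e2 h Suc fs lf by (metis nth_Cons_Suc)
        qed
      next
        fix i assume i: "i < nL a b + 1"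
        show "final_seq a b (int i + 1) = - (rgt a b ! i)"
        proof (cases i)
          case 0
          have "final_seq a (b-a) (int 0 + 1) = - rgt a (b-a) ! 0" using IH by auto
          then show ?thesis using 0 l0 by (simp add: fs seq_step_def rg2)
        next
          case (Suc k)
          have "final_seq a (b-a) (int (Suc k) + 1) = - rgt a (b-a) ! Suc k" using IH i nl Suc by auto
          then show ?thesis using Suc l0 by (simp add: fs seq_step_def rg2 algebra_simps)
        qed
      qed (use IH nl rg2 lf l0 in auto)
    qed
  qed
qed

lemma lft_L: "b < a \<Longrightarrow> 0 < b \<Longrightarrow> lft a b = incr_hd (lft (a-b) b)"
  by (simp add: lft_def word_L lstep_def)
lemma rgt_L: "b < a \<Longrightarrow> 0 < b \<Longrightarrow> rgt a b = 2 # rgt (a-b) b"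
  by (simp add: rgt_def word_L rstep_def)
lemma lft_R: "a < b \<Longrightarrow> 0 < a \<Longrightarrow> lft a b = 2 # lft a (b-a)"
  by (simp add: lft_def word_R lstep_def)
lemma rgt_R: "a < b \<Longrightarrow> 0 < a \<Longrightarrow> rgt a b = incr_hd (rgt a (b-a))"
  by (simp add: rgt_def word_R rstep_def)
lemma lr_base: "a = 0 \<or> b = 0 \<or> a = b \<Longrightarrow> lft a b = [1] \<and> rgt a b = [1]"
  by (simp add: lft_def rgt_def word_base)

type_synonym m4 = "int \<times> int \<times> int \<times> int"
fun mm :: "m4 \<Rightarrow> m4 \<Rightarrow> m4" where
  "mm (a,b,c,d) (e,f,g,h) = (a*e+b*g, a*f+b*h, c*e+d*g, c*f+d*h)"
lemma mm_assoc: "mm (mm x y) z = mm x (mm y z)"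
  by (cases x; cases y; cases z) (simp add: algebra_simps)
lemma mm_id: "mm (1,0,0,1) y = y"
  by (cases y) simp
fun mat :: "int list \<Rightarrow> m4" where
  "mat [] = (1,0,0,1)"
| "mat (x # xs) = mm (x,-1,1,0) (mat xs)"
lemma mat_append: "mat (xs @ ys) = mm (mat xs) (mat ys)"
  by (induction xs) (simp_all add: mm_id mm_assoc)
definition incr_last :: "int list \<Rightarrow> int list" where
  "incr_last xs = butlast xs @ [last xs + 1]"
lemma mat_incr_hd: "xs \<noteq> [] \<Longrightarrow> mat (incr_hd xs) = mm (1,1,0,1) (mat xs)"
  by (cases xs) (simp_all add: incr_hd_def mm_assoc[symmetric])
lemma mat_incr_last: "xs \<noteq> [] \<Longrightarrow> mat (incr_last xs) = mm (mat xs) (1,0,-1,1)"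
proof -
  assume "xs \<noteq> []"
  then have "mat xs = mm (mat (butlast xs)) (mat [last xs])"
    by (metis append_butlast_last_id mat_append)
  then show ?thesis
    by (simp add: incr_last_def mat_append mm_assoc)
qed

definition J :: "int list \<Rightarrow> int list \<Rightarrow> int list" where
  "J l r = butlast l @ [last l + last r + 2] @ rev (butlast r)"

lemma J_L: "l \<noteq> [] \<Longrightarrow> r \<noteq> [] \<Longrightarrow> J (incr_hd l) (2 # r) = incr_hd (J l r) @ [2]"
  by (cases l rule: list.exhaust; cases "tl l"; cases r) (auto simp: J_def incr_hd_def)

lemma J_R: "l \<noteq> [] \<Longrightarrow> r \<noteq> [] \<Longrightarrow> J (2 # l) (incr_hd r) = 2 # incr_last (J l r)"
  by (cases r rule: list.exhaust; cases "tl r"; cases l) (auto simp: J_def incr_hd_def incr_last_def butlast_append)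

lemma lr_nonempty: "lft a b \<noteq> [] \<and> rgt a b \<noteq> []"
  using main_idx[of a b] by auto

lemma incr_hd_ge2: "\<forall>x\<in>set xs. x \<ge> 2 \<Longrightarrow> \<forall>x\<in>set (incr_hd xs). x \<ge> 2"
  by (cases xs) (auto simp: incr_hd_def)
lemma incr_last_ge2: "\<forall>x\<in>set xs. x \<ge> 2 \<Longrightarrow> xs \<noteq> [] \<Longrightarrow> \<forall>x\<in>set (incr_last xs). x \<ge> 2"
proof -
  assume h: "\<forall>x\<in>set xs. x \<ge> 2" "xs \<noteq> []"
  then have "last xs \<ge> 2" by simp
  moreover have "\<forall>x\<in>set (butlast xs). x \<ge> 2" using h by (auto dest: in_set_butlastD)
  ultimately show ?thesis by (simp add: incr_last_def)
qed

lemma inv_mat: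
  "coprime a b \<Longrightarrow> 0 < a \<Longrightarrow> 0 < b \<Longrightarrow>
   mat (J (lft a b) (rgt a b)) = ((int a + int b)^2, -((int a + int b) * int a - 1),
                                 (int a + int b) * int b - 1, -(int a * int b - 1))
   \<and> (\<forall>x\<in>set (J (lft a b) (rgt a b)). x \<ge> 2)"
proof (induction a b rule: word.induct)
  case (1 a b)
  show ?case
  proof (cases "a = b")
    case True
    with "1.prems" have "a = 1" "b = 1" by auto
    then show ?thesis using lr_base[of a b] by (simp add: J_def numeral_eq_Suc)
  next
    case False
    show ?thesis
    proof (cases "b < a")
      case True
      have cop: "coprime (a - b) b" using "1.prems"(1) True
        by (simp add: coprime_iff_gcd_eq_1 gcd_diff1_nat)
      note IH = "1.IH"(1)[OF _ True cop _ "1.prems"(3)] 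
      have IH': "mat (J (lft (a-b) b) (rgt (a-b) b)) = ((int (a-b) + int b)^2, -((int (a-b) + int b) * int (a-b) - 1),
                                 (int (a-b) + int b) * int b - 1, -(int (a-b) * int b - 1))"
                "\<forall>x\<in>set (J (lft (a-b) b) (rgt (a-b) b)). x \<ge> 2"
        using IH False True "1.prems" by auto
      have e: "J (lft a b) (rgt a b) = incr_hd (J (lft (a-b) b) (rgt (a-b) b)) @ [2]"
        using True "1.prems" lr_nonempty by (simp add: lft_L rgt_L J_L)
      have ne: "J (lft (a-b) b) (rgt (a-b) b) \<noteq> []" by (simp add: J_def)
      have ia: "int (a - b) = int a - int b" using True by simp
      show ?thesis
        using IH'(2) incr_hd_ge2[OF IH'(2)]
        by (simp add: e mat_append mat_incr_hd[OF ne] IH'(1) ia power2_eq_square algebra_simps)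
    next
      case nt: False
      with False have ab: "a < b" by auto
      have cop: "coprime a (b - a)" using "1.prems"(1) ab
        by (simp add: coprime_iff_gcd_eq_1 gcd.commute[of a] gcd_diff1_nat)
      note IH = "1.IH"(2)[OF _ nt cop "1.prems"(2)] 
      have IH': "mat (J (lft a (b-a)) (rgt a (b-a))) = ((int a + int (b-a))^2, -((int a + int (b-a)) * int a - 1),
                                 (int a + int (b-a)) * int (b-a) - 1, -(int a * int (b-a) - 1))"
                "\<forall>x\<in>set (J (lft a (b-a)) (rgt a (b-a))). x \<ge> 2"
        using IH False ab "1.prems" by auto
      have e: "J (lft a b) (rgt a b) = 2 # incr_last (J (lft a (b-a)) (rgt a (b-a)))"
        using ab "1.prems" lr_nonempty by (simp add: lft_R rgt_R J_R)
      have ne: "J (lft a (b-a)) (rgt a (b-a)) \<noteq> []" by (simp add: J_def)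
      have ib: "int (b - a) = int b - int a" using ab by simp
      show ?thesis
        using IH'(2) incr_last_ge2[OF IH'(2) ne]
        by (simp add: e mat_incr_last[OF ne] IH'(1) ib power2_eq_square algebra_simps)
    qed
  qed
qed

lemma hjcf_cons: "xs \<noteq> [] \<Longrightarrow> hjcf (x # xs) = x - 1 / hjcf xs"
  by (cases xs) auto

lemma hjcf_mat:
  "xs \<noteq> [] \<Longrightarrow> \<forall>x\<in>set xs. x \<ge> 2 \<Longrightarrow>
   (case mat xs of (m11, m12, m21, m22) \<Rightarrow> 0 < m21 \<and> m21 < m11 \<and>
      hjcf (map real_of_int xs) = real_of_int m11 / real_of_int m21)"
proof (induction xs)
  case Nil then show ?case by simp
next
  case (Cons x xs)
  show ?case
  proof (cases "xs = []")
    case True then show ?thesis using Cons by auto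
  next
    case False
    obtain m11 m12 m21 m22 where m: "mat xs = (m11, m12, m21, m22)" by (cases "mat xs") auto
    have IH: "0 < m21" "m21 < m11" "hjcf (map real_of_int xs) = real_of_int m11 / real_of_int m21"
      using Cons.IH[OF False] Cons.prems m by auto
    have x2: "x \<ge> 2" using Cons.prems by auto
    have "x * m11 - m21 > m11"
    proof -
      have "x * m11 \<ge> 2 * m11" using x2 IH by (intro mult_right_mono) auto
      then show ?thesis using IH by linarith
    qed
    moreover have "hjcf (map real_of_int (x # xs)) = real_of_int (x * m11 - m21) / real_of_int m11"
    proof -
      have "1 / hjcf (map real_of_int xs) = real_of_int m21 / real_of_int m11" using IH by simp
      moreover have "real_of_int m11 \<noteq> 0" using IH by simp
      ultimately show ?thesis using False by (simp add: hjcf_cons field_simps)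
    qed
    ultimately show ?thesis using IH m by simp
  qed
qed

lemma rev_chain: "rev (chain a b) = map real_of_int (J (lft a b) (rgt a b))"
proof -
  define f where "f = final_seq a b"
  define nl where "nl = nL a b"
  define nr where "nr = nR a b"
  define l where "l = lft a b"
  define r where "r = rgt a b"
  have len: "length l = nr + 1" "length r = nl + 1"
    and pl: "\<forall>x\<in>set l. x \<ge> 1" and pr: "\<forall>x\<in>set r. x \<ge> 1"
    and fr: "\<forall>i < nl + 1. f (int i + 1) = - (r ! i)"
    and fl: "\<forall>i < nr + 1. f (- int i - 1) = - (l ! i)"
    using main_idx[of a b] unfolding f_def nl_def nr_def l_def r_def by auto
  have A: "map (\<lambda>j. real_of_int \<bar>f j\<bar>) [1 .. int nl] = map real_of_int (butlast r)"
  proof (rule nth_equalityI)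
    show "length (map (\<lambda>j. real_of_int \<bar>f j\<bar>) [1 .. int nl]) = length (map real_of_int (butlast r))"
      using len by simp
  next
    fix i assume "i < length (map (\<lambda>j. real_of_int \<bar>f j\<bar>) [1 .. int nl])"
    then have i: "i < nl" by simp
    have "[1 .. int nl] ! i = 1 + int i" using i by (simp add: nth_upto)
    moreover have "f (1 + int i) = - (r ! i)" using fr i by (simp add: add.commute)
    moreover have "r ! i \<ge> 1" using pr i len by (simp add: nth_mem)
    moreover have "butlast r ! i = r ! i" using i len by (simp add: nth_butlast)
    ultimately show "map (\<lambda>j. real_of_int \<bar>f j\<bar>) [1 .. int nl] ! i = map real_of_int (butlast r) ! i"
      using i len by simp
  qed
  have B: "map (\<lambda>j. real_of_int \<bar>f j\<bar>) [- int nr .. -1] = rev (map real_of_int (butlast l))"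
  proof (rule nth_equalityI)
    show "length (map (\<lambda>j. real_of_int \<bar>f j\<bar>) [- int nr .. -1]) = length (rev (map real_of_int (butlast l)))"
      using len by simp
  next
    fix i assume "i < length (map (\<lambda>j. real_of_int \<bar>f j\<bar>) [- int nr .. -1])"
    then have i: "i < nr" by simp
    have "[- int nr .. -1] ! i = - int nr + int i" using i by (simp add: nth_upto)
    moreover have "f (- int nr + int i) = - (l ! (nr - 1 - i))"
    proof -
      have h: "f (- int (nr - 1 - i) - 1) = - (l ! (nr - 1 - i))" by (rule fl[rule_format]) simp
      have e: "- int (nr - 1 - i) - 1 = - int nr + int i" using i by simp
      show ?thesis using h e by metis
    qed
    moreover have "l ! (nr - 1 - i) \<ge> 1" using pl i len by (simp add: nth_mem)
    moreover have "rev (map real_of_int (butlast l)) ! i = real_of_int (l ! (nr - 1 - i))"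
      using i len by (simp add: rev_nth nth_butlast)
    ultimately show "map (\<lambda>j. real_of_int \<bar>f j\<bar>) [- int nr .. -1] ! i = rev (map real_of_int (butlast l)) ! i"
      using i len by simp
  qed
  have ne: "r \<noteq> []" "l \<noteq> []" using len by auto
  have lr: "last r = r ! nl" "last l = l ! nr" using len ne by (simp_all add: last_conv_nth)
  have "r ! nl \<ge> 1" "l ! nr \<ge> 1" using pr pl len by (simp_all add: nth_mem)
  moreover have "f (int nl + 1) = - (r ! nl)" using fr by simp
  moreover have "f (- (int nr + 1)) = - (l ! nr)" using fl[rule_format, of nr] by simp
  ultimately have C: "\<bar>cval a b\<bar> = last l + last r + 2"
    unfolding cval_def lr by (simp add: f_def nl_def nr_def l_def r_def)
  show ?thesis
    unfolding chain_def J_def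
    using A B C by (simp add: f_def nl_def nr_def l_def r_def rev_map)
qed

theorem lemma3p1:
  fixes p q :: nat
  assumes "coprime p q" and "1 \<le> q" and "q < p"
  shows "hjcf (chain (p - q) q) = real (p^2) / real (p * q - 1)
       \<or> hjcf (rev (chain (p - q) q)) = real (p^2) / real (p * q - 1)"
proof -
  have cop: "coprime (p - q) q" using assms by (simp add: coprime_iff_gcd_eq_1 gcd_diff1_nat)
  have inv: "mat (J (lft (p-q) q) (rgt (p-q) q)) = ((int (p-q) + int q)^2, -((int (p-q) + int q) * int (p-q) - 1),
                                 (int (p-q) + int q) * int q - 1, -(int (p-q) * int q - 1))"
     and ge: "\<forall>x\<in>set (J (lft (p-q) q) (rgt (p-q) q)). x \<ge> 2"
    using inv_mat[OF cop] assms by auto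
  have ne: "J (lft (p-q) q) (rgt (p-q) q) \<noteq> []" by (simp add: J_def)
  have h: "hjcf (map real_of_int (J (lft (p-q) q) (rgt (p-q) q))) =
        real_of_int ((int (p-q) + int q)^2) / real_of_int ((int (p-q) + int q) * int q - 1)"
    using hjcf_mat[OF ne ge] inv by simp
  have e1: "int (p-q) + int q = int p" using assms by simp
  have pq: "p * q \<ge> 1" using assms by simp
  have "real_of_int (int p * int q - 1) = real (p * q - 1)" using pq by (simp add: of_nat_diff)
  then have "hjcf (rev (chain (p - q) q)) = real (p^2) / real (p * q - 1)"
    using h e1 by (simp add: rev_chain)
  then show ?thesis by blast
qed

end
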